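(* Let $R$ be a Krull domain. (1) If the divisor class group $\operatorname{Cl}(R)$ is torsion, then $R$ is globally perinormal. (2) If $\dim R = 1$ and $R$ is globally perinormal, then $\operatorname{Cl}(R)$ is torsion.
   Context: All rings are commutative with identity; an overring of a domain $R$ is a ring between $R$ and its fraction field. A ring extension $A \subseteq B$ satisfies going-down if whenever $\mathfrak{p} \subset \mathfrak{q}$ are primes of $A$ and $Q$ is a prime of $B$ with $Q \cap A = \mathfrak{q}$, there is a prime $P \subseteq Q$ of $B$ with $P \cap A = \mathfrak{p}$. A domain $R$ is globally perinormal if every overring $S$ of $R$ such that $R \subseteq S$ satisfies going-down is a localization $R_W$ of $R$ at some multiplicative set $W$. A Krull domain is a domain $R$ with $R = \bigcap R_{\mathfrak{p}}$ over height one primes $\mathfrak{p}$, each nonzero element lying in only finitely many height one primes, and each $R_{\mathfrak{p}}$ ($\mathfrak{p}$ height one) a DVR; $\operatorname{Cl}(R)$ is its divisor class group. *)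

theory Defs
  imports Main "HOL-Computational_Algebra.Fraction_Field"
begin

text \<open>All rings considered are subrings of a fixed field K (a type of class field).
 A domain R is represented as the subring of its fraction field
 K = 'a fract given by the image of the embedding a \<mapsto> Fract a 1.\<close>

definition subring :: "'b::field set \<Rightarrow> bool" where
  "subring S \<longleftrightarrow> 0 \<in> S \<and> 1 \<in> S \<and>
     (\<forall>x\<in>S. \<forall>y\<in>S. x + y \<in> S \<and> x - y \<in> S \<and> x * y \<in> S)"

definition ideal_in :: "'b::field set \<Rightarrow> 'b set \<Rightarrow> bool" where
  "ideal_in S I \<longleftrightarrow> I \<subseteq> S \<and> 0 \<in> I \<and>
     (\<forall>x\<in>I. \<forall>y\<in>I. x + y \<in> I) \<and> (\<forall>s\<in>S. \<forall>x\<in>I. s * x \<in> I)"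

definition prime_ideal_in :: "'b::field set \<Rightarrow> 'b set \<Rightarrow> bool" where
  "prime_ideal_in S P \<longleftrightarrow> ideal_in S P \<and> P \<noteq> S \<and>
     (\<forall>x\<in>S. \<forall>y\<in>S. x * y \<in> P \<longrightarrow> x \<in> P \<or> y \<in> P)"

definition principal_ideal :: "'b::field set \<Rightarrow> 'b \<Rightarrow> 'b set" where
  "principal_ideal S t = {s * t | s. s \<in> S}"

definition height_one_prime :: "'b::field set \<Rightarrow> 'b set \<Rightarrow> bool" where
  "height_one_prime S P \<longleftrightarrow> prime_ideal_in S P \<and> P \<noteq> {0} \<and>
     \<not> (\<exists>Q. prime_ideal_in S Q \<and> Q \<noteq> {0} \<and> Q \<subset> P)"

definition mult_set :: "'b::field set \<Rightarrow> 'b set \<Rightarrow> bool" where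
  "mult_set S W \<longleftrightarrow> W \<subseteq> S \<and> 1 \<in> W \<and> 0 \<notin> W \<and> (\<forall>x\<in>W. \<forall>y\<in>W. x * y \<in> W)"

definition localization :: "'b::field set \<Rightarrow> 'b set \<Rightarrow> 'b set" where
  "localization S W = {a * inverse w | a w. a \<in> S \<and> w \<in> W}"

definition dvr :: "'b::field set \<Rightarrow> bool" where
  "dvr V \<longleftrightarrow> subring V \<and>
     (\<forall>I. ideal_in V I \<longrightarrow> (\<exists>t\<in>V. I = principal_ideal V t)) \<and>
     (\<exists>!P. prime_ideal_in V P \<and> P \<noteq> {0})"

definition units_in :: "'b::field set \<Rightarrow> 'b set" where
  "units_in V = {u. u \<in> V \<and> u \<noteq> 0 \<and> inverse u \<in> V}"

definition dvr_val :: "'b::field set \<Rightarrow> 'b \<Rightarrow> int" where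
  "dvr_val V x = (THE n. \<exists>t u. t \<in> V \<and> t \<noteq> 0 \<and> prime_ideal_in V (principal_ideal V t)
        \<and> u \<in> units_in V \<and> x = u * t powi n)"

definition local_at :: "'b::field set \<Rightarrow> 'b set \<Rightarrow> 'b set" where
  "local_at S P = localization S (S - P)"

text \<open>Krull domain R inside its fraction field (which is all of the type 'b).\<close>
definition krull_domain :: "'b::field set \<Rightarrow> bool" where
  "krull_domain R \<longleftrightarrow> subring R \<and>
     R = (\<Inter>P\<in>{P. height_one_prime R P}. local_at R P) \<and>
     (\<forall>x\<in>R. x \<noteq> 0 \<longrightarrow> finite {P. height_one_prime R P \<and> x \<in> P}) \<and>
     (\<forall>P. height_one_prime R P \<longrightarrow> dvr (local_at R P))"

definition divisors :: "'b::field set \<Rightarrow> ('b set \<Rightarrow> int) set" where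
  "divisors R = {D. finite {P. D P \<noteq> 0} \<and> (\<forall>P. D P \<noteq> 0 \<longrightarrow> height_one_prime R P)}"

definition principal_divisor :: "'b::field set \<Rightarrow> 'b \<Rightarrow> 'b set \<Rightarrow> int" where
  "principal_divisor R x = (\<lambda>P. if height_one_prime R P then dvr_val (local_at R P) x else 0)"

definition principal_divisors :: "'b::field set \<Rightarrow> ('b set \<Rightarrow> int) set" where
  "principal_divisors R = {principal_divisor R x | x. x \<noteq> 0}"

text \<open>Cl(R) = Div(R)/Prin(R) is torsion: every class has finite order, i.e. every
  divisor has a positive multiple which is principal.\<close>
definition class_group_torsion :: "'b::field set \<Rightarrow> bool" where
  "class_group_torsion R \<longleftrightarrow>
     (\<forall>D\<in>divisors R. \<exists>n::int. n > 0 \<and> (\<lambda>P. n * D P) \<in> principal_divisors R)"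

definition overring :: "'b::field set \<Rightarrow> 'b set \<Rightarrow> bool" where
  "overring R S \<longleftrightarrow> subring S \<and> R \<subseteq> S"

definition going_down :: "'b::field set \<Rightarrow> 'b set \<Rightarrow> bool" where
  "going_down A B \<longleftrightarrow> (\<forall>p q Q. prime_ideal_in A p \<and> prime_ideal_in A q \<and> p \<subset> q \<and>
      prime_ideal_in B Q \<and> Q \<inter> A = q \<longrightarrow>
      (\<exists>P. prime_ideal_in B P \<and> P \<subseteq> Q \<and> P \<inter> A = p))"

definition globally_perinormal :: "'b::field set \<Rightarrow> bool" where
  "globally_perinormal R \<longleftrightarrow>
     (\<forall>S. overring R S \<and> going_down R S \<longrightarrow> (\<exists>W. mult_set R W \<and> S = localization R W))"

definition krull_dim_one :: "'b::field set \<Rightarrow> bool" where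
  "krull_dim_one R \<longleftrightarrow>
     (\<exists>P0 P1. prime_ideal_in R P0 \<and> prime_ideal_in R P1 \<and> P0 \<subset> P1) \<and>
     \<not> (\<exists>P0 P1 P2. prime_ideal_in R P0 \<and> prime_ideal_in R P1 \<and> prime_ideal_in R P2
          \<and> P0 \<subset> P1 \<and> P1 \<subset> P2)"

definition dom_in_frac :: "('a::idom) fract set" where
  "dom_in_frac = range (\<lambda>a. Fract a 1)"

end

theory Submission
  imports Defs
begin


lemma subringD:
  assumes "subring S"
  shows "0 \<in> S" "1 \<in> S" "x \<in> S \<Longrightarrow> y \<in> S \<Longrightarrow> x + y \<in> S"
    "x \<in> S \<Longrightarrow> y \<in> S \<Longrightarrow> x - y \<in> S" "x \<in> S \<Longrightarrow> y \<in> S \<Longrightarrow> x * y \<in> S"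
  using assms unfolding subring_def by auto

lemma subring_power: "subring S \<Longrightarrow> x \<in> S \<Longrightarrow> x ^ n \<in> S"
  by (induction n) (auto intro: subringD)

lemma idealD:
  assumes "ideal_in S I"
  shows "I \<subseteq> S" "0 \<in> I" "x \<in> I \<Longrightarrow> y \<in> I \<Longrightarrow> x + y \<in> I"
    "s \<in> S \<Longrightarrow> x \<in> I \<Longrightarrow> s * x \<in> I"
  using assms unfolding ideal_in_def by auto

lemma prime_one_notin:
  assumes "prime_ideal_in S P" "subring S"
  shows "1 \<notin> P"
proof
  assume "1 \<in> P"
  then have "S \<subseteq> P" using idealD(4)[of S P _ 1] assms unfolding prime_ideal_in_def by auto
  then show False using assms unfolding prime_ideal_in_def ideal_in_def by auto
qed

lemma prime_power:
  assumes "prime_ideal_in S P" "subring S" "x \<in> S" "x ^ n \<in> P"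
  shows "x \<in> P"
  using assms(4)
proof (induction n)
  case 0 then show ?case using prime_one_notin[OF assms(1,2)] by simp
next
  case (Suc n)
  have "x ^ n \<in> S" using subring_power assms by auto
  then show ?case using Suc assms unfolding prime_ideal_in_def by (auto simp: mult.commute)
qed

lemma prime_mult:
  assumes "prime_ideal_in S P" "x \<in> S" "y \<in> S" "x * y \<in> P"
  shows "x \<in> P \<or> y \<in> P"
  using assms unfolding prime_ideal_in_def by auto

lemma principal_ideal_in:
  assumes S: "subring S" and x: "x \<in> S"
  shows "ideal_in S (principal_ideal S x)"
      unfolding ideal_in_def principal_ideal_def
    proof (intro conjI ballI)
      show "{s * x |s. s \<in> S} \<subseteq> S" using S x by (auto intro: subringD)
      show "0 \<in> {s * x |s. s \<in> S}" using S subringD(1)[OF S] by force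
      fix a b assume "a \<in> {s * x |s. s \<in> S}" "b \<in> {s * x |s. s \<in> S}"
      then obtain s1 s2 where "s1 \<in> S" "s2 \<in> S" "a = s1 * x" "b = s2 * x" by auto
      then show "a + b \<in> {s * x |s. s \<in> S}" using S
        by (auto intro!: exI[of _ "s1 + s2"] subringD simp: distrib_right)
    next
      fix a b assume "a \<in> S" "b \<in> {s * x |s. s \<in> S}"
      then obtain s2 where "s2 \<in> S" "b = s2 * x" by auto
      then show "a * b \<in> {s * x |s. s \<in> S}" using S \<open>a \<in> S\<close>
        by (auto intro!: exI[of _ "a * s2"] subringD simp: mult.assoc)
    qed

lemma exists_prime:
  assumes S: "subring S" and x: "x \<in> S" and nu: "\<not> (\<exists>y\<in>S. x * y = 1)"
  shows "\<exists>Q. prime_ideal_in S Q \<and> x \<in> Q"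
proof -
  define A where "A = {I. ideal_in S I \<and> x \<in> I \<and> 1 \<notin> I}"
  have xA: "principal_ideal S x \<in> A"
  proof -
    have "ideal_in S (principal_ideal S x)" using principal_ideal_in[OF S x] .
    moreover have "x \<in> principal_ideal S x" using subringD(2)[OF S]
      unfolding principal_ideal_def by force
    moreover have "1 \<notin> principal_ideal S x" using nu unfolding principal_ideal_def
      by (auto simp: mult.commute)
    ultimately show ?thesis unfolding A_def by auto
  qed
  have "\<forall>C\<in>chains A. \<exists>U\<in>A. \<forall>X\<in>C. X \<subseteq> U"
  proof
    fix C assume C: "C \<in> chains A"
    show "\<exists>U\<in>A. \<forall>X\<in>C. X \<subseteq> U"
    proof (cases "C = {}")
      case True then show ?thesis using xA by auto
    next
      case False
      have CA: "C \<subseteq> A" and ch: "\<And>X Y. X \<in> C \<Longrightarrow> Y \<in> C \<Longrightarrow> X \<subseteq> Y \<or> Y \<subseteq> X"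
        using C unfolding chains_def chain_subset_def by auto
      have "\<Union>C \<in> A" unfolding A_def ideal_in_def
      proof (intro CollectI conjI ballI)
        show "\<Union>C \<subseteq> S" using CA unfolding A_def ideal_in_def by auto
        show "0 \<in> \<Union>C" using CA False unfolding A_def ideal_in_def by auto
        show "x \<in> \<Union>C" using CA False unfolding A_def by auto
        show "1 \<notin> \<Union>C" using CA unfolding A_def by auto
        fix a b assume "a \<in> \<Union>C" "b \<in> \<Union>C"
        then obtain X Y where XY: "X \<in> C" "Y \<in> C" "a \<in> X" "b \<in> Y" by auto
        show "a + b \<in> \<Union>C"
        proof (cases "X \<subseteq> Y")
          case True then show ?thesis using XY CA unfolding A_def ideal_in_def by blast
        next
          case False then have "Y \<subseteq> X" using ch XY by auto
          then show ?thesis using XY CA unfolding A_def ideal_in_def by blast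
        qed
      next
        fix a b assume "a \<in> S" "b \<in> \<Union>C"
        then show "a * b \<in> \<Union>C" using CA unfolding A_def ideal_in_def by blast
      qed
      then show ?thesis by auto
    qed
  qed
  from Zorn_Lemma2[OF this] obtain M where MA: "M \<in> A" and Mmax: "\<And>X. X \<in> A \<Longrightarrow> M \<subseteq> X \<Longrightarrow> X = M"
    by blast
  have Mi: "ideal_in S M" "x \<in> M" "1 \<notin> M" using MA unfolding A_def by auto
  have ext: "1 \<in> {m + a * s | m s. m \<in> M \<and> s \<in> S}" if a: "a \<in> S" "a \<notin> M" for a
  proof -
    define J where "J = {m + a * s | m s. m \<in> M \<and> s \<in> S}"
    have MJ: "M \<subseteq> J" unfolding J_def
    proof
      fix m assume "m \<in> M" then show "m \<in> {m + a * s | m s. m \<in> M \<and> s \<in> S}"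
        using subringD(1)[OF S] by force
    qed
    have "a = 0 + a * 1" by simp
    then have aJ: "a \<in> J" unfolding J_def using idealD(2)[OF Mi(1)] subringD(2)[OF S]
      by blast
    have "ideal_in S J" unfolding ideal_in_def
    proof (intro conjI ballI)
      show "J \<subseteq> S" unfolding J_def using idealD(1)[OF Mi(1)] a S by (auto intro!: subringD)
      show "0 \<in> J" using MJ idealD(2)[OF Mi(1)] by auto
      fix p q assume "p \<in> J" "q \<in> J"
      then obtain m1 s1 m2 s2 where "m1 \<in> M" "s1 \<in> S" "m2 \<in> M" "s2 \<in> S"
        "p = m1 + a * s1" "q = m2 + a * s2" unfolding J_def by auto
      then have "p + q = (m1 + m2) + a * (s1 + s2)" "m1 + m2 \<in> M" "s1 + s2 \<in> S"
        using idealD(3)[OF Mi(1)] subringD(3)[OF S] by (simp_all add: algebra_simps)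
      then show "p + q \<in> J" unfolding J_def by blast
    next
      fix r q assume "r \<in> S" "q \<in> J"
      then obtain m2 s2 where "m2 \<in> M" "s2 \<in> S" "q = m2 + a * s2" unfolding J_def by auto
      then have "r * q = (r * m2) + a * (r * s2)" "r * m2 \<in> M" "r * s2 \<in> S"
        using idealD(4)[OF Mi(1)] subringD(5)[OF S] \<open>r \<in> S\<close> by (auto simp: distrib_left mult.assoc mult.left_commute)
      then show "r * q \<in> J" unfolding J_def by blast
    qed
    moreover have "J \<noteq> M" using aJ a by auto
    ultimately have "J \<notin> A" using Mmax MJ by blast
    then show ?thesis using \<open>ideal_in S J\<close> MJ Mi(2) unfolding A_def J_def by auto
  qed
  have "prime_ideal_in S M" unfolding prime_ideal_in_def
  proof (intro conjI ballI impI)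
    show "ideal_in S M" by fact
    show "M \<noteq> S" using Mi(3) subringD(2)[OF S] by auto
    fix a b assume ab: "a \<in> S" "b \<in> S" "a * b \<in> M"
    show "a \<in> M \<or> b \<in> M"
    proof (rule ccontr)
      assume "\<not> (a \<in> M \<or> b \<in> M)"
      with ext ab obtain m1 s1 m2 s2 where m: "m1 \<in> M" "s1 \<in> S" "m2 \<in> M" "s2 \<in> S"
        "1 = m1 + a * s1" "1 = m2 + b * s2" by blast
      have "(1::'a) = (m1 + a * s1) * (m2 + b * s2)" using m by simp
      also have "\<dots> = m1 * (m2 + b * s2) + m2 * (a * s1) + (s1 * s2) * (a * b)"
        by (simp add: algebra_simps)
      also have "\<dots> \<in> M"
      proof -
        have MS: "M \<subseteq> S" using idealD(1)[OF Mi(1)] .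
        have "m2 + b * s2 \<in> S" using m ab MS subringD(3,5)[OF S] by blast
        then have 1: "m1 * (m2 + b * s2) \<in> M" using idealD(4)[OF Mi(1) _ m(1)] by (metis mult.commute)
        have "a * s1 \<in> S" using m ab subringD(5)[OF S] by blast
        then have 2: "m2 * (a * s1) \<in> M" using idealD(4)[OF Mi(1) _ m(3)] by (metis mult.commute)
        have "s1 * s2 \<in> S" using m subringD(5)[OF S] by blast
        then have 3: "(s1 * s2) * (a * b) \<in> M" using idealD(4)[OF Mi(1)] ab by blast
        show ?thesis using 1 2 3 idealD(3)[OF Mi(1)] by blast
      qed
      finally show False using Mi(3) by simp
    qed
  qed
  then show ?thesis using Mi(2) by auto
qed



locale dvrc =
  fixes V :: "'b::field set"
  assumes dvr: "dvr V"
    and frac: "\<And>z. \<exists>a\<in>V. \<exists>b\<in>V. b \<noteq> 0 \<and> z = a * inverse b"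
begin

lemma S: "subring V" using dvr unfolding dvr_def by auto

lemma pid: "ideal_in V I \<Longrightarrow> \<exists>t\<in>V. I = principal_ideal V t"
  using dvr unfolding dvr_def by auto

definition M where "M = (THE P. prime_ideal_in V P \<and> P \<noteq> {0})"

lemma M_ex1: "\<exists>!P. prime_ideal_in V P \<and> P \<noteq> {0}" using dvr unfolding dvr_def by auto

lemma M_prime: "prime_ideal_in V M" and M_nz: "M \<noteq> {0}"
  using theI'[OF M_ex1] unfolding M_def by auto

lemma M_unique: "prime_ideal_in V Q \<Longrightarrow> Q \<noteq> {0} \<Longrightarrow> Q = M"
  using M_ex1 M_prime M_nz by blast

lemma M_ideal: "ideal_in V M" using M_prime unfolding prime_ideal_in_def by auto

lemma one_notin_M: "1 \<notin> M" using prime_one_notin[OF M_prime S] .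

lemma unit_iff: "u \<in> units_in V \<longleftrightarrow> u \<in> V \<and> u \<noteq> 0 \<and> inverse u \<in> V"
  unfolding units_in_def by auto

lemma nonunit_in_M:
  assumes x: "x \<in> V" "x \<notin> units_in V"
  shows "x \<in> M"
proof (cases "x = 0")
  case True then show ?thesis using idealD(2)[OF M_ideal] by simp
next
  case False
  have "\<not> (\<exists>y\<in>V. x * y = 1)"
  proof
    assume "\<exists>y\<in>V. x * y = 1"
    then obtain y where "y \<in> V" "x * y = 1" by auto
    then have "inverse x = y" using False by (simp add: inverse_unique)
    then show False using x False \<open>y \<in> V\<close> unfolding units_in_def by auto
  qed
  from exists_prime[OF S x(1) this] obtain Q where Q: "prime_ideal_in V Q" "x \<in> Q" by auto
  then have "Q \<noteq> {0}" using False by auto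
  then show ?thesis using M_unique Q by auto
qed

definition unif where
  "unif t \<longleftrightarrow> t \<in> V \<and> t \<noteq> 0 \<and> prime_ideal_in V (principal_ideal V t)"

lemma self_in_principal: "t \<in> V \<Longrightarrow> t \<in> principal_ideal V t"
  using subringD(2)[OF S] unfolding principal_ideal_def by force

lemma unif_M: "unif t \<Longrightarrow> principal_ideal V t = M"
  unfolding unif_def using M_unique self_in_principal by blast

lemma unif_ex: "\<exists>t. unif t"
proof -
  obtain t where t: "t \<in> V" "M = principal_ideal V t" using pid[OF M_ideal] by auto
  have "t \<noteq> 0"
  proof
    assume "t = 0"
    then have "M = {0}" using t unfolding principal_ideal_def by auto
    then show False using M_nz by simp
  qed
  then show ?thesis using t M_prime unfolding unif_def by auto
qed

lemma unif_dvd: "unif t \<Longrightarrow> x \<in> M \<Longrightarrow> \<exists>r\<in>V. x = r * t"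
  using unif_M unfolding principal_ideal_def by auto

lemma unif_inv_notin: "unif t \<Longrightarrow> inverse t \<notin> V"
proof
  assume t: "unif t" "inverse t \<in> V"
  then have "inverse t * t \<in> principal_ideal V t" unfolding principal_ideal_def by auto
  then have "1 \<in> M" using unif_M[OF t(1)] t(1) unfolding unif_def by auto
  then show False using one_notin_M by simp
qed

lemma units_mult: "u \<in> units_in V \<Longrightarrow> w \<in> units_in V \<Longrightarrow> u * w \<in> units_in V"
  unfolding units_in_def using subringD(5)[OF S] by (auto simp: inverse_mult_distrib)

lemma units_inverse: "u \<in> units_in V \<Longrightarrow> inverse u \<in> units_in V"
  unfolding units_in_def by auto

lemma units_one: "1 \<in> units_in V"
  unfolding units_in_def using subringD(2)[OF S] by auto

lemma units_power: "u \<in> units_in V \<Longrightarrow> u ^ n \<in> units_in V"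
  by (induction n) (auto intro: units_mult units_one)

lemma units_powi: "u \<in> units_in V \<Longrightarrow> u powi n \<in> units_in V"
  by (cases "n \<ge> 0") (auto simp: power_int_def intro: units_power units_inverse)

lemma unif_power_nonunit:
  assumes t: "unif t" and k: "k > 0" and u: "t ^ k \<in> units_in V"
  shows False
proof -
  have "inverse t = t ^ (k - 1) * inverse (t ^ k)"
  proof -
    have tz: "t \<noteq> 0" using t unfolding unif_def by auto
    have "t ^ k = t * t ^ (k - 1)" using k by (metis Suc_diff_1 power_Suc)
    then show ?thesis using tz by (simp add: field_simps)
  qed
  moreover have "t ^ (k - 1) \<in> V" using subring_power[OF S] t unfolding unif_def by auto
  ultimately have "inverse t \<in> V" using u subringD(5)[OF S] unfolding units_in_def by auto
  then show False using unif_inv_notin[OF t] by simp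
qed

lemma rep_nat:
  assumes x: "x \<in> V" "x \<noteq> 0" and t: "unif t"
  shows "\<exists>n::nat. \<exists>u\<in>units_in V. x = u * t ^ n"
proof -
  have tV: "t \<in> V" "t \<noteq> 0" using t unfolding unif_def by auto
  have ex: "\<exists>n. x * inverse (t ^ Suc n) \<notin> V"
  proof (rule ccontr)
    assume "\<not> ?thesis"
    then have all: "\<And>n. x * inverse (t ^ Suc n) \<in> V" by auto
    define I where "I = {z \<in> V. \<exists>n. t ^ n * z \<in> principal_ideal V x}"
    have Ii: "ideal_in V I" unfolding ideal_in_def
    proof (intro conjI ballI)
      show "I \<subseteq> V" unfolding I_def by auto
      show "0 \<in> I" unfolding I_def using idealD(2)[OF principal_ideal_in[OF S x(1)]]
        subringD(1)[OF S] by auto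
      fix a b assume "a \<in> I" "b \<in> I"
      then obtain n m where nm: "a \<in> V" "b \<in> V" "t ^ n * a \<in> principal_ideal V x"
        "t ^ m * b \<in> principal_ideal V x" unfolding I_def by auto
      have "t ^ m \<in> V" "t ^ n \<in> V" using subring_power[OF S tV(1)] by auto
      then have "t ^ m * (t ^ n * a) + t ^ n * (t ^ m * b) \<in> principal_ideal V x"
        using nm idealD(3,4)[OF principal_ideal_in[OF S x(1)]] by blast
      moreover have "t ^ m * (t ^ n * a) + t ^ n * (t ^ m * b) = t ^ (n + m) * (a + b)"
        by (simp add: algebra_simps power_add)
      ultimately show "a + b \<in> I" unfolding I_def using nm subringD(3)[OF S] by auto
    next
      fix r a assume "r \<in> V" "a \<in> I"
      then obtain n where n: "a \<in> V" "t ^ n * a \<in> principal_ideal V x" unfolding I_def by auto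
      then have "r * (t ^ n * a) \<in> principal_ideal V x"
        using idealD(4)[OF principal_ideal_in[OF S x(1)]] \<open>r \<in> V\<close> by blast
      then have "t ^ n * (r * a) \<in> principal_ideal V x" by (simp add: algebra_simps)
      then show "r * a \<in> I" unfolding I_def using n \<open>r \<in> V\<close> subringD(5)[OF S] by auto
    qed
    then obtain c where c: "c \<in> V" "I = principal_ideal V c" using pid by auto
    have "c \<in> I" using c self_in_principal by auto
    then obtain N r where Nr: "r \<in> V" "t ^ N * c = r * x" unfolding I_def principal_ideal_def by auto
    define y where "y = x * inverse (t ^ Suc N)"
    have yV: "y \<in> V" using all y_def by auto
    have "t ^ Suc N * y = 1 * x" unfolding y_def using tV by (simp add: field_simps)
    then have "y \<in> I" unfolding I_def principal_ideal_def using yV subringD(2)[OF S] by blast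
    then obtain s where s: "s \<in> V" "y = s * c" using c unfolding principal_ideal_def by auto
    have "x * inverse t = t ^ N * y" unfolding y_def using tV by (simp add: field_simps)
    also have "\<dots> = s * (t ^ N * c)" using s by (simp add: algebra_simps)
    also have "\<dots> = (s * r) * x" using Nr by (simp add: algebra_simps)
    finally have "inverse t = s * r" using x(2) by (metis mult.commute mult_left_cancel)
    then have "inverse t \<in> V" using s Nr subringD(5)[OF S] by auto
    then show False using unif_inv_notin[OF t] by simp
  qed
  define n where "n = (LEAST n. x * inverse (t ^ Suc n) \<notin> V)"
  have n1: "x * inverse (t ^ Suc n) \<notin> V" unfolding n_def using LeastI_ex[OF ex] .
  have n2: "x * inverse (t ^ n) \<in> V"
  proof (cases n)
    case 0 then show ?thesis using x by simp
  next
    case (Suc m)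
    then have "m < n" by simp
    then have "\<not> (x * inverse (t ^ Suc m) \<notin> V)" unfolding n_def using not_less_Least by blast
    then show ?thesis using Suc by simp
  qed
  define u where "u = x * inverse (t ^ n)"
  have xu: "x = u * t ^ n" unfolding u_def using tV by simp
  have "u \<in> units_in V"
  proof (rule ccontr)
    assume "u \<notin> units_in V"
    then have "u \<in> M" using nonunit_in_M n2 u_def by auto
    then obtain r where r: "r \<in> V" "u = r * t" using unif_dvd[OF t] by auto
    have "x * inverse (t ^ Suc n) = r" using xu r tV by (simp add: field_simps)
    then show False using n1 r by simp
  qed
  then show ?thesis using xu by blast
qed

lemma rep:
  assumes x: "x \<noteq> 0" and t: "unif t"
  shows "\<exists>n::int. \<exists>u\<in>units_in V. x = u * t powi n"
proof -
  obtain a b where ab: "a \<in> V" "b \<in> V" "b \<noteq> 0" "x = a * inverse b" using frac by blast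
  then have "a \<noteq> 0" using x by auto
  obtain n1 u1 where 1: "u1 \<in> units_in V" "a = u1 * t ^ n1" using rep_nat[OF ab(1) \<open>a \<noteq> 0\<close> t] by auto
  obtain n2 u2 where 2: "u2 \<in> units_in V" "b = u2 * t ^ n2" using rep_nat[OF ab(2,3) t] by auto
  have tz: "t \<noteq> 0" using t unfolding unif_def by auto
  have p: "t powi (int n1 - int n2) = t ^ n1 * inverse (t ^ n2)"
    using tz by (simp add: power_int_diff divide_inverse)
  have "x = (u1 * t ^ n1) * inverse (u2 * t ^ n2)" using ab 1 2 by simp
  also have "\<dots> = (u1 * inverse u2) * (t ^ n1 * inverse (t ^ n2))"
    by (simp add: inverse_mult_distrib mult_ac)
  finally have "x = (u1 * inverse u2) * t powi (int n1 - int n2)" using p by simp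
  moreover have "u1 * inverse u2 \<in> units_in V" using 1 2 units_mult units_inverse by auto
  ultimately show ?thesis by blast
qed

lemma uniq:
  assumes t: "unif t" and t': "unif t'" and u: "u \<in> units_in V" and u': "u' \<in> units_in V"
    and eq: "u * t powi n = u' * t' powi m"
  shows "n = m"
proof -
  have tz: "t \<noteq> 0" "t' \<noteq> 0" using t t' unfolding unif_def by auto
  have "t' \<in> M" using unif_M[OF t'] self_in_principal t' unfolding unif_def by auto
  then obtain e where e: "e \<in> V" "t' = e * t" using unif_dvd[OF t] by auto
  have "t \<in> M" using unif_M[OF t] self_in_principal t unfolding unif_def by auto
  then obtain f where f: "f \<in> V" "t = f * t'" using unif_dvd[OF t'] by auto
  have "t = (f * e) * t" using e f by (simp add: algebra_simps)
  then have "f * e = 1" using tz by simp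
  then have "e * f = 1" by (simp add: mult.commute)
  then have "inverse e = f" by (rule inverse_unique)
  moreover have "e \<noteq> 0" using \<open>e * f = 1\<close> by auto
  ultimately have eu: "e \<in> units_in V" using e f unfolding units_in_def by auto
  have uz: "u \<noteq> 0" using u unfolding units_in_def by auto
  have "u * t powi n = u' * e powi m * t powi m" using eq e(2) by (simp add: power_int_mult_distrib mult_ac)
  then have "t powi n = (u' * e powi m * inverse u) * t powi m" using uz
    by (simp add: field_simps)
  then have "t powi n / t powi m = (u' * e powi m * inverse u)" using tz by simp
  then have "t powi (n - m) = (u' * e powi m * inverse u)" using tz by (simp add: power_int_diff)
  moreover have "u' * e powi m * inverse u \<in> units_in V"
    using u u' eu units_mult units_inverse units_powi by auto
  ultimately have U: "t powi (n - m) \<in> units_in V" by simp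
  show ?thesis
  proof (rule ccontr)
    assume "n \<noteq> m"
    then consider "n - m > 0" | "n - m < 0" by linarith
    then show False
    proof cases
      case 1
      then have "t ^ nat (n - m) \<in> units_in V" using U by (simp add: power_int_def)
      moreover have "nat (n - m) > 0" using 1 by simp
      ultimately show False using unif_power_nonunit[OF t] by blast
    next
      case 2
      then have "inverse (t ^ nat (m - n)) \<in> units_in V" using U by (simp add: power_int_def power_inverse)
      then have "t ^ nat (m - n) \<in> units_in V" using units_inverse by fastforce
      moreover have "nat (m - n) > 0" using 2 by simp
      ultimately show False using unif_power_nonunit[OF t] by blast
    qed
  qed
qed

lemma val_eq:
  assumes t: "unif t" and u: "u \<in> units_in V" and x: "x = u * t powi n"
  shows "dvr_val V x = n"
  unfolding dvr_val_def
proof (rule the_equality)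
  show "\<exists>t u. t \<in> V \<and> t \<noteq> 0 \<and> prime_ideal_in V (principal_ideal V t) \<and> u \<in> units_in V \<and> x = u * t powi n"
    using t u x unfolding unif_def by blast
next
  fix m assume "\<exists>t u. t \<in> V \<and> t \<noteq> 0 \<and> prime_ideal_in V (principal_ideal V t) \<and> u \<in> units_in V \<and> x = u * t powi m"
  then obtain t' u' where "unif t'" "u' \<in> units_in V" "x = u' * t' powi m" unfolding unif_def by blast
  then show "m = n" using uniq[OF \<open>unif t'\<close> t \<open>u' \<in> _\<close> u] x by simp
qed

lemma val_rep:
  assumes x: "x \<noteq> 0" and t: "unif t"
  shows "\<exists>u\<in>units_in V. x = u * t powi (dvr_val V x)"
  using rep[OF x t] val_eq[OF t] by metis

lemma val_mult:
  assumes "x \<noteq> 0" "y \<noteq> 0"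
  shows "dvr_val V (x * y) = dvr_val V x + dvr_val V y"
proof -
  obtain t where t: "unif t" using unif_ex by auto
  have tz: "t \<noteq> 0" using t unfolding unif_def by auto
  define a where "a = dvr_val V x"
  define b where "b = dvr_val V y"
  obtain u w where uw: "u \<in> units_in V" "x = u * t powi a"
    "w \<in> units_in V" "y = w * t powi b" using val_rep[OF _ t] assms unfolding a_def b_def by metis
  have "x * y = (u * w) * (t powi a * t powi b)" by (subst uw(2), subst uw(4)) (simp add: mult_ac)
  then have "x * y = (u * w) * t powi (a + b)" "u * w \<in> units_in V"
    using tz uw units_mult by (auto simp: power_int_add)
  then have "dvr_val V (x * y) = a + b" using val_eq[OF t] by blast
  then show ?thesis unfolding a_def b_def .
qed

lemma val_powi:
  assumes "x \<noteq> 0"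
  shows "dvr_val V (x powi k) = k * dvr_val V x"
proof -
  obtain t where t: "unif t" using unif_ex by auto
  define a where "a = dvr_val V x"
  obtain u where u: "u \<in> units_in V" "x = u * t powi a" using val_rep[OF assms t] unfolding a_def by auto
  have "x powi k = u powi k * (t powi a) powi k"
    by (subst u(2)) (simp add: power_int_mult_distrib)
  also have "(t powi a) powi k = t powi (k * a)"
    by (simp add: power_int_mult[symmetric] mult.commute)
  finally have "x powi k = u powi k * t powi (k * a)" .
  then have "dvr_val V (x powi k) = k * a" using val_eq[OF t units_powi[OF u(1)]] by blast
  then show ?thesis unfolding a_def .
qed

lemma val_power:
  assumes "x \<noteq> 0"
  shows "dvr_val V (x ^ k) = int k * dvr_val V x"
  using val_powi[OF assms, of "int k"] by simp

lemma val_inverse: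
  assumes "x \<noteq> 0"
  shows "dvr_val V (inverse x) = - dvr_val V x"
  using val_powi[OF assms, of "-1"] by (simp add: power_int_minus)

lemma val_nonneg_iff:
  assumes x: "x \<noteq> 0"
  shows "x \<in> V \<longleftrightarrow> dvr_val V x \<ge> 0"
proof
  obtain t where t: "unif t" using unif_ex by auto
  assume "x \<in> V"
  then obtain n u where "u \<in> units_in V" "x = u * t ^ n" using rep_nat[OF _ x t] by auto
  then have "dvr_val V x = int n" using val_eq[OF t, of u x "int n"] by simp
  then show "dvr_val V x \<ge> 0" by simp
next
  obtain t where t: "unif t" using unif_ex by auto
  define a where "a = dvr_val V x"
  assume "dvr_val V x \<ge> 0"
  then have a0: "a \<ge> 0" unfolding a_def .
  obtain u where u: "u \<in> units_in V" "x = u * t powi a" using val_rep[OF x t] unfolding a_def by auto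
  have "t powi a = t ^ nat a" using a0 by (simp add: power_int_def)
  then have "x = u * t ^ nat a" using u(2) by simp
  moreover have "t ^ nat a \<in> V" using t subring_power[OF S] unfolding unif_def by auto
  moreover have "u \<in> V" using u unfolding units_in_def by auto
  ultimately show "x \<in> V" using subringD(5)[OF S] by metis
qed

lemma val_zero_iff:
  assumes x: "x \<noteq> 0"
  shows "x \<in> units_in V \<longleftrightarrow> dvr_val V x = 0"
proof
  obtain t where t: "unif t" using unif_ex by auto
  assume "x \<in> units_in V"
  then show "dvr_val V x = 0" using val_eq[OF t, of x x 0] by simp
next
  obtain t where t: "unif t" using unif_ex by auto
  define a where "a = dvr_val V x"
  assume "dvr_val V x = 0"
  then have a0: "a = 0" unfolding a_def .
  obtain u where u: "u \<in> units_in V" "x = u * t powi a" using val_rep[OF x t] unfolding a_def by auto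
  have "t powi a = 1" using a0 by simp
  then have "x = u" using u(2) by simp
  then show "x \<in> units_in V" using u(1) by simp
qed

lemma inverse_in:
  assumes "x \<noteq> 0" "x \<notin> V"
  shows "inverse x \<in> V"
  using val_nonneg_iff[of x] val_nonneg_iff[of "inverse x"] val_inverse[of x] assms by auto

end



locale krullc =
  fixes R :: "'b::field set"
  assumes krull: "krull_domain R"
    and fracR: "\<And>z. \<exists>a\<in>R. \<exists>b\<in>R. b \<noteq> 0 \<and> z = a * inverse b"
begin

abbreviation ht1 where "ht1 P \<equiv> height_one_prime R P"
abbreviation loc where "loc P \<equiv> local_at R P"
abbreviation v where "v P x \<equiv> dvr_val (local_at R P) x"

lemma SR: "subring R" using krull unfolding krull_domain_def by auto

lemma ht1_prime: "ht1 P \<Longrightarrow> prime_ideal_in R P" unfolding height_one_prime_def by auto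

lemma ht1_sub: "ht1 P \<Longrightarrow> P \<subseteq> R" using ht1_prime unfolding prime_ideal_in_def ideal_in_def by auto

lemma ht1_zero: "ht1 P \<Longrightarrow> 0 \<in> P" using ht1_prime unfolding prime_ideal_in_def ideal_in_def by auto

lemma ht1_one: "ht1 P \<Longrightarrow> 1 \<notin> P" using prime_one_notin[OF ht1_prime SR] by auto

lemma ht1_ideal: "ht1 P \<Longrightarrow> ideal_in R P" using ht1_prime unfolding prime_ideal_in_def by auto

lemma loc_iff: "z \<in> loc P \<longleftrightarrow> (\<exists>a w. a \<in> R \<and> w \<in> R \<and> w \<notin> P \<and> z = a * inverse w)"
  unfolding local_at_def localization_def by auto

lemma R_sub_loc: "ht1 P \<Longrightarrow> R \<subseteq> loc P"
proof
  fix a assume "ht1 P" "a \<in> R"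
  moreover have "a = a * inverse 1" by simp
  ultimately show "a \<in> loc P" unfolding loc_iff using subringD(2)[OF SR] ht1_one by blast
qed

lemma dvr_loc: "ht1 P \<Longrightarrow> dvr (loc P)" using krull unfolding krull_domain_def by auto

lemma dvrc_loc: "ht1 P \<Longrightarrow> dvrc (loc P)"
  unfolding dvrc_def using dvr_loc fracR R_sub_loc by blast

lemma loc_subring: "ht1 P \<Longrightarrow> subring (loc P)" using dvrc.S[OF dvrc_loc] .

lemma in_loc_iff: "ht1 P \<Longrightarrow> x \<noteq> 0 \<Longrightarrow> x \<in> loc P \<longleftrightarrow> v P x \<ge> 0"
  using dvrc.val_nonneg_iff[OF dvrc_loc] by blast

lemma v_mult: "ht1 P \<Longrightarrow> x \<noteq> 0 \<Longrightarrow> y \<noteq> 0 \<Longrightarrow> v P (x * y) = v P x + v P y"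
  using dvrc.val_mult[OF dvrc_loc] by blast

lemma v_power: "ht1 P \<Longrightarrow> x \<noteq> 0 \<Longrightarrow> v P (x ^ k) = int k * v P x"
  using dvrc.val_power[OF dvrc_loc] by blast

lemma v_powi: "ht1 P \<Longrightarrow> x \<noteq> 0 \<Longrightarrow> v P (x powi k) = k * v P x"
  using dvrc.val_powi[OF dvrc_loc] by blast

lemma v_inverse: "ht1 P \<Longrightarrow> x \<noteq> 0 \<Longrightarrow> v P (inverse x) = - v P x"
  using dvrc.val_inverse[OF dvrc_loc] by blast

lemma loc_inverse: "ht1 P \<Longrightarrow> x \<noteq> 0 \<Longrightarrow> x \<notin> loc P \<Longrightarrow> inverse x \<in> loc P"
  using dvrc.inverse_in[OF dvrc_loc] by blast

lemma K1: "ht1 P \<Longrightarrow> x \<in> R \<Longrightarrow> x \<noteq> 0 \<Longrightarrow> v P x \<ge> 0"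
  using in_loc_iff R_sub_loc by blast

lemma K2:
  assumes P: "ht1 P" and x: "x \<in> P" "x \<noteq> 0"
  shows "v P x \<ge> 1"
proof (rule ccontr)
  have xR: "x \<in> R" using x ht1_sub P by auto
  assume "\<not> v P x \<ge> 1"
  then have "v P x = 0" using K1[OF P xR x(2)] by simp
  then have "x \<in> units_in (loc P)" using dvrc.val_zero_iff[OF dvrc_loc[OF P] x(2)] by simp
  then have "inverse x \<in> loc P" unfolding units_in_def by auto
  then obtain a w where aw: "a \<in> R" "w \<in> R" "w \<notin> P" "inverse x = a * inverse w" unfolding loc_iff by auto
  have "w \<noteq> 0" using aw ht1_zero[OF P] by auto
  then have "w = x * a" using aw(4) x(2) by (simp add: field_simps)
  moreover have "a * x \<in> P" using idealD(4)[OF ht1_ideal[OF P] aw(1) x(1)] .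
  ultimately show False using aw(3) by (simp add: mult.commute)
qed

lemma K3:
  assumes P: "ht1 P" and x: "x \<in> R" "x \<notin> P"
  shows "v P x = 0"
proof -
  have xz: "x \<noteq> 0" using x ht1_zero[OF P] by auto
  have "inverse x = 1 * inverse x" by simp
  then have "inverse x \<in> loc P" unfolding loc_iff using x subringD(2)[OF SR] by blast
  moreover have "x \<in> loc P" using R_sub_loc[OF P] x by auto
  ultimately have "x \<in> units_in (loc P)" using xz unfolding units_in_def by auto
  then show ?thesis using dvrc.val_zero_iff[OF dvrc_loc[OF P] xz] by simp
qed

lemma R_eq: "R = (\<Inter>P\<in>{P. ht1 P}. loc P)" using krull unfolding krull_domain_def by auto

lemma K4:
  assumes "x \<noteq> 0" "\<And>P. ht1 P \<Longrightarrow> v P x \<ge> 0"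
  shows "x \<in> R"
proof -
  have "\<forall>P\<in>{P. ht1 P}. x \<in> loc P" using in_loc_iff assms by auto
  then show ?thesis using R_eq by blast
qed

lemma in_all_loc: "(\<And>P. ht1 P \<Longrightarrow> x \<in> loc P) \<Longrightarrow> x \<in> R"
  using R_eq by blast

lemma finite_ht1: "x \<in> R \<Longrightarrow> x \<noteq> 0 \<Longrightarrow> finite {P. ht1 P \<and> x \<in> P}"
  using krull unfolding krull_domain_def by auto

lemma finite_bad: "finite {P. ht1 P \<and> s \<notin> loc P}"
proof -
  obtain a b where ab: "a \<in> R" "b \<in> R" "b \<noteq> 0" "s = a * inverse b" using fracR by blast
  have "{P. ht1 P \<and> s \<notin> loc P} \<subseteq> {P. ht1 P \<and> b \<in> P}"
    using ab unfolding loc_iff by auto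
  then show ?thesis using finite_subset finite_ht1[OF ab(2,3)] by blast
qed

lemma ht1_incomp:
  assumes "ht1 P" "ht1 Q" "Q \<subseteq> P"
  shows "Q = P"
  using assms unfolding height_one_prime_def by auto

end



context krullc
begin

definition delta :: "'b set \<Rightarrow> 'b set \<Rightarrow> int" where
  "delta P = (\<lambda>Q. if Q = P then 1 else 0)"

lemma delta_div: "ht1 P \<Longrightarrow> delta P \<in> divisors R"
  unfolding divisors_def delta_def by (auto simp: Collect_conv_if)

lemma torsion_elem:
  assumes tor: "class_group_torsion R" and P: "ht1 P"
  shows "\<exists>x n. x \<in> R \<and> x \<noteq> 0 \<and> n > 0 \<and> v P x = n \<and> (\<forall>Q. ht1 Q \<and> Q \<noteq> P \<longrightarrow> v Q x = 0)"
proof -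
  obtain n where n: "n > 0" "(\<lambda>Q. n * delta P Q) \<in> principal_divisors R"
    using tor delta_div[OF P] unfolding class_group_torsion_def by blast
  then obtain x where x: "x \<noteq> 0" "principal_divisor R x = (\<lambda>Q. n * delta P Q)"
    unfolding principal_divisors_def by auto
  have vx: "v Q x = (if Q = P then n else 0)" if "ht1 Q" for Q
    using fun_cong[OF x(2), of Q] that unfolding principal_divisor_def delta_def by auto
  have "x \<in> R" using K4[OF x(1)] vx n(1) by (metis order.strict_implies_order order_refl)
  moreover have "\<forall>Q. ht1 Q \<and> Q \<noteq> P \<longrightarrow> v Q x = 0" using vx by auto
  ultimately show ?thesis using x vx[OF P] n by auto
qed

lemma K5:
  assumes S: "subring S" "R \<subseteq> S" and P: "ht1 P" and P': "prime_ideal_in S P'" "P' \<inter> R = P"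
    and s: "s \<in> S" "s \<notin> loc P"
  shows False
proof -
  have "0 \<in> loc P" using R_sub_loc[OF P] subringD(1)[OF SR] by auto
  then have sz: "s \<noteq> 0" using s by auto
  have "inverse s \<in> loc P" using loc_inverse[OF P sz s(2)] .
  then obtain a w where aw: "a \<in> R" "w \<in> R" "w \<notin> P" "inverse s = a * inverse w" unfolding loc_iff by auto
  have wz: "w \<noteq> 0" using aw ht1_zero[OF P] by auto
  then have w: "w = s * a" using aw(4) sz by (simp add: field_simps)
  show False
  proof (cases "a \<in> P")
    case False
    then have "a \<noteq> 0" using ht1_zero[OF P] by auto
    then have "s = w * inverse a" using w sz by (simp add: field_simps)
    then have "s \<in> loc P" unfolding loc_iff using aw False by blast
    then show False using s by simp
  next
    case True
    then have "a \<in> P'" using P' by auto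
    then have "s * a \<in> P'" using idealD(4)[of S P' s a] P' s unfolding prime_ideal_in_def by auto
    then have "w \<in> P' \<inter> R" using w aw by auto
    then show False using aw P' by auto
  qed
qed

lemma contract_prime:
  assumes S: "subring S" "R \<subseteq> S" and Q: "prime_ideal_in S Q"
  shows "prime_ideal_in R (Q \<inter> R)"
proof -
  have Qi: "ideal_in S Q" using Q unfolding prime_ideal_in_def by auto
  have "1 \<notin> Q" using prime_one_notin[OF Q S(1)] .
  then have ne: "Q \<inter> R \<noteq> R" using subringD(2)[OF SR] by auto
  have "ideal_in R (Q \<inter> R)" unfolding ideal_in_def
    using idealD[OF Qi] S subringD[OF SR] by auto
  then show ?thesis unfolding prime_ideal_in_def using ne Q S unfolding prime_ideal_in_def by auto
qed

lemma P_in_q: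
  assumes P: "ht1 P" and x: "x \<in> R" "x \<noteq> 0" "v P x = n" "n > 0"
    and xo: "\<And>Q. ht1 Q \<Longrightarrow> Q \<noteq> P \<Longrightarrow> v Q x = 0"
    and q: "prime_ideal_in R q" "x \<in> q"
  shows "P \<subseteq> q"
proof
  fix y assume y: "y \<in> P"
  show "y \<in> q"
  proof (rule ccontr)
    assume yq: "y \<notin> q"
    have "0 \<in> q" using q unfolding prime_ideal_in_def ideal_in_def by auto
    then have yz: "y \<noteq> 0" using yq by auto
    have yR: "y \<in> R" using y ht1_sub[OF P] by auto
    define z where "z = y ^ nat n * inverse x"
    have yn: "y ^ nat n \<noteq> 0" using yz by simp
    have zz: "z \<noteq> 0" unfolding z_def using yz x by simp
    have vz: "v Q z = int (nat n) * v Q y - v Q x" if "ht1 Q" for Q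
      unfolding z_def using v_mult[OF that yn] v_power[OF that yz] v_inverse[OF that x(2)] x(2) by simp
    have "z \<in> R"
    proof (rule K4[OF zz])
      fix Q assume Q: "ht1 Q"
      show "v Q z \<ge> 0"
      proof (cases "Q = P")
        case True
        then have "v Q y \<ge> 1" using K2[OF P y yz] by simp
        then have "int (nat n) * v Q y \<ge> n" using x(4)
          by (metis int_nat_eq less_le mult.right_neutral mult_left_mono order.strict_implies_order)
        then show ?thesis using vz[OF Q] x(3) True by simp
      next
        case False
        then show ?thesis using vz[OF Q] xo[OF Q False] K1[OF Q yR yz] by simp
      qed
    qed
    then have "z * x \<in> q" using q idealD(4)[of R q z x] unfolding prime_ideal_in_def by auto
    moreover have "z * x = y ^ nat n" unfolding z_def using x(2) by simp
    ultimately have "y ^ nat n \<in> q" by simp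
    then show False using prime_power[OF q(1) SR yR] yq by blast
  qed
qed

lemma inverse_in_S:
  assumes tor: "class_group_torsion R" and S: "subring S" "R \<subseteq> S" and gd: "going_down R S"
    and P: "ht1 P" and s: "s \<in> S" "s \<notin> loc P"
    and x: "x \<in> R" "x \<noteq> 0" "v P x = n" "n > 0"
    and xo: "\<And>Q. ht1 Q \<Longrightarrow> Q \<noteq> P \<Longrightarrow> v Q x = 0"
  shows "inverse x \<in> S"
proof (rule ccontr)
  assume ni: "inverse x \<notin> S"
  have "\<not> (\<exists>y\<in>S. x * y = 1)"
  proof
    assume "\<exists>y\<in>S. x * y = 1"
    then obtain y where "y \<in> S" "x * y = 1" by auto
    then have "inverse x = y" by (simp add: inverse_unique)
    then show False using ni \<open>y \<in> S\<close> by simp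
  qed
  then obtain Q where Q: "prime_ideal_in S Q" "x \<in> Q" using exists_prime[OF S(1)] x S by blast
  define q where "q = Q \<inter> R"
  have q: "prime_ideal_in R q" unfolding q_def using contract_prime[OF S Q(1)] .
  have "x \<in> q" unfolding q_def using Q x by auto
  then have Pq: "P \<subseteq> q" using P_in_q[OF P x xo q] by auto
  have "\<exists>P'. prime_ideal_in S P' \<and> P' \<inter> R = P"
  proof (cases "P = q")
    case True then show ?thesis using Q q_def by auto
  next
    case False
    then have "P \<subset> q" using Pq by auto
    then show ?thesis using gd ht1_prime[OF P] q Q(1) unfolding going_down_def q_def by blast
  qed
  then obtain P' where "prime_ideal_in S P'" "P' \<inter> R = P" by auto
  then show False using K5[OF S P _ _ s] by blast
qed

theorem part1:
  assumes tor: "class_group_torsion R"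
  shows "globally_perinormal R"
  unfolding globally_perinormal_def
proof (intro allI impI)
  fix S assume "overring R S \<and> going_down R S"
  then have S: "subring S" "R \<subseteq> S" and gd: "going_down R S" unfolding overring_def by auto
  define W where "W = {w. w \<in> R \<and> w \<noteq> 0 \<and> inverse w \<in> S}"
  have W1: "1 \<in> W" unfolding W_def using subringD(2)[OF SR] subringD(2)[OF S(1)] by auto
  have Wmult: "a * b \<in> W" if "a \<in> W" "b \<in> W" for a b
    using that subringD(5)[OF SR] subringD(5)[OF S(1)] unfolding W_def
    by (auto simp: inverse_mult_distrib)
  have mW: "mult_set R W" unfolding mult_set_def using W1 Wmult unfolding W_def by auto
  have key: "\<exists>w\<in>W. \<forall>P\<in>T. s * w \<in> loc P"
    if s: "s \<in> S" and T: "finite T" "T \<subseteq> {P. ht1 P \<and> s \<notin> loc P}" for s T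
    using T
  proof (induction T rule: finite_induct)
    case empty then show ?case using W1 by auto
  next
    case (insert P T)
    then obtain w where w: "w \<in> W" "\<forall>Q\<in>T. s * w \<in> loc Q" by auto
    have P: "ht1 P" "s \<notin> loc P" using insert by auto
    show ?case
    proof (cases "s * w \<in> loc P")
      case True then show ?thesis using w by auto
    next
      case False
      obtain x n where x: "x \<in> R" "x \<noteq> 0" "n > 0" "v P x = n"
        and xo: "\<forall>Q. ht1 Q \<and> Q \<noteq> P \<longrightarrow> v Q x = 0"
        using torsion_elem[OF tor P(1)] by blast
      have ix: "inverse x \<in> S" using inverse_in_S[OF tor S gd P(1) s P(2) x(1,2,4,3)] xo by blast
      define m where "m = nat (- v P (s * w))"
      have "inverse (x ^ m) = inverse x ^ m" by (simp add: power_inverse)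
      then have "inverse (x ^ m) \<in> S" using ix subring_power[OF S(1)] by simp
      then have xm: "x ^ m \<in> W" unfolding W_def using x subring_power[OF SR] by auto
      have w': "w * x ^ m \<in> W" using Wmult[OF w(1) xm] .
      have "0 \<in> loc P" using R_sub_loc[OF P(1)] subringD(1)[OF SR] by auto
      then have swz: "s * w \<noteq> 0" using False by auto
      have xmz: "x ^ m \<noteq> 0" using x by simp
      have "v P (s * w * x ^ m) = v P (s * w) + int m * n"
        using v_mult[OF P(1) swz xmz] v_power[OF P(1) x(2)] x(4) by simp
      also have "\<dots> \<ge> 0" using x(3) unfolding m_def
        by (smt (verit) mult_le_cancel_left1 nat_0_le of_nat_0_le_iff int_nat_eq)
      finally have "s * w * x ^ m \<in> loc P" using in_loc_iff[OF P(1)] swz xmz by simp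
      moreover have "s * w * x ^ m \<in> loc Q" if "Q \<in> T" for Q
      proof -
        have Q: "ht1 Q" using insert that by auto
        have "x ^ m \<in> loc Q" using R_sub_loc[OF Q] subring_power[OF SR x(1)] by auto
        then show ?thesis using w(2) that subringD(5)[OF loc_subring[OF Q]] by blast
      qed
      ultimately show ?thesis using w' by (auto simp: mult.assoc intro!: bexI[of _ "w * x ^ m"])
    qed
  qed
  have "S = localization R W"
  proof
    show "localization R W \<subseteq> S"
      unfolding localization_def W_def using S subringD(5)[OF S(1)] by auto
  next
    show "S \<subseteq> localization R W"
    proof
      fix s assume s: "s \<in> S"
      show "s \<in> localization R W"
      proof (cases "s = 0")
        case True
        then have "s = 0 * inverse 1" by simp
        then show ?thesis unfolding localization_def using W1 subringD(1)[OF SR] by blast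
      next
        case False
        obtain w where w: "w \<in> W" "\<forall>P\<in>{P. ht1 P \<and> s \<notin> loc P}. s * w \<in> loc P"
          using key[OF s finite_bad] by blast
        have wR: "w \<in> R" "w \<noteq> 0" using w unfolding W_def by auto
        have "s * w \<in> R"
        proof (rule in_all_loc)
          fix P assume P: "ht1 P"
          show "s * w \<in> loc P"
          proof (cases "s \<in> loc P")
            case True
            then show ?thesis using R_sub_loc[OF P] wR subringD(5)[OF loc_subring[OF P]] by blast
          next
            case False then show ?thesis using w P by auto
          qed
        qed
        moreover have "s = (s * w) * inverse w" using wR by simp
        ultimately show ?thesis unfolding localization_def using w by blast
      qed
    qed
  qed
  then show "\<exists>W. mult_set R W \<and> S = localization R W" using mW by blast
qed

end



context krullc
begin

lemma zero_prime: "subring S \<Longrightarrow> prime_ideal_in S {0}"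
  unfolding prime_ideal_in_def ideal_in_def using subringD[of S] by auto

lemma delta_torsion:
  assumes dim: "krull_dim_one R" and gp: "globally_perinormal R" and P: "ht1 P"
  shows "\<exists>n>0. \<exists>w. w \<noteq> 0 \<and> principal_divisor R w = (\<lambda>Q. n * delta P Q)"
proof -
  define S where "S = (\<Inter>Q\<in>{Q. ht1 Q \<and> Q \<noteq> P}. loc Q)"
  have subS: "subring S" unfolding subring_def S_def
  proof (intro conjI ballI)
    show "0 \<in> (\<Inter>Q\<in>{Q. ht1 Q \<and> Q \<noteq> P}. loc Q)" using subringD(1)[OF loc_subring] by blast
    show "1 \<in> (\<Inter>Q\<in>{Q. ht1 Q \<and> Q \<noteq> P}. loc Q)" using subringD(2)[OF loc_subring] by blast
    fix x y assume xy: "x \<in> (\<Inter>Q\<in>{Q. ht1 Q \<and> Q \<noteq> P}. loc Q)" "y \<in> (\<Inter>Q\<in>{Q. ht1 Q \<and> Q \<noteq> P}. loc Q)"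
    show "x + y \<in> (\<Inter>Q\<in>{Q. ht1 Q \<and> Q \<noteq> P}. loc Q)"
    proof
      fix Q assume "Q \<in> {Q. ht1 Q \<and> Q \<noteq> P}"
      then show "x + y \<in> loc Q" using xy subringD(3)[OF loc_subring] by blast
    qed
    show "x - y \<in> (\<Inter>Q\<in>{Q. ht1 Q \<and> Q \<noteq> P}. loc Q)"
    proof
      fix Q assume "Q \<in> {Q. ht1 Q \<and> Q \<noteq> P}"
      then show "x - y \<in> loc Q" using xy subringD(4)[OF loc_subring] by blast
    qed
    show "x * y \<in> (\<Inter>Q\<in>{Q. ht1 Q \<and> Q \<noteq> P}. loc Q)"
    proof
      fix Q assume "Q \<in> {Q. ht1 Q \<and> Q \<noteq> P}"
      then show "x * y \<in> loc Q" using xy subringD(5)[OF loc_subring] by blast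
    qed
  qed
  have RS: "R \<subseteq> S" unfolding S_def using R_sub_loc by blast
  have gd: "going_down R S" unfolding going_down_def
  proof (intro allI impI)
    fix p q Q assume a: "prime_ideal_in R p \<and> prime_ideal_in R q \<and> p \<subset> q \<and> prime_ideal_in S Q \<and> Q \<inter> R = q"
    have p0: "p = {0}"
    proof (rule ccontr)
      assume "p \<noteq> {0}"
      moreover have "0 \<in> p" using a unfolding prime_ideal_in_def ideal_in_def by auto
      ultimately have "{0} \<subset> p" by auto
      moreover have "prime_ideal_in R {0}" using zero_prime[OF SR] .
      moreover have "prime_ideal_in R p" "prime_ideal_in R q" "p \<subset> q" using a by auto
      ultimately show False using dim unfolding krull_dim_one_def by blast
    qed
    have "0 \<in> Q" using a unfolding prime_ideal_in_def ideal_in_def by auto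
    then show "\<exists>P. prime_ideal_in S P \<and> P \<subseteq> Q \<and> P \<inter> R = p"
      using zero_prime[OF subS] p0 subringD(1)[OF SR] by (intro exI[of _ "{0}"]) auto
  qed
  obtain W where W: "mult_set R W" "S = localization R W"
    using gp subS RS gd unfolding globally_perinormal_def overring_def by blast
  have "0 \<in> P" using ht1_zero[OF P] .
  moreover have "P \<noteq> {0}" using P unfolding height_one_prime_def by auto
  ultimately obtain a where a: "a \<in> P" "a \<noteq> 0" by auto
  have aR: "a \<in> R" using a ht1_sub[OF P] by auto
  define F where "F = {Q. ht1 Q \<and> a \<in> Q \<and> Q \<noteq> P}"
  have finF: "finite F" unfolding F_def by (rule finite_subset[OF _ finite_ht1[OF aR a(2)]]) auto
  have bex: "\<exists>b\<in>R. b \<notin> P \<and> (\<forall>Q\<in>G. v Q b \<ge> v Q a)" if "finite G" "G \<subseteq> F" for G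
    using that
  proof (induction G rule: finite_induct)
    case empty then show ?case using subringD(2)[OF SR] ht1_one[OF P] by auto
  next
    case (insert Q G)
    then obtain b where b: "b \<in> R" "b \<notin> P" "\<forall>Q\<in>G. v Q b \<ge> v Q a" by auto
    have Q: "ht1 Q" "a \<in> Q" "Q \<noteq> P" using insert unfolding F_def by auto
    have "\<not> Q \<subseteq> P" using ht1_incomp[OF P Q(1)] Q(3) by auto
    then obtain c where c: "c \<in> Q" "c \<notin> P" by auto
    have cR: "c \<in> R" using c ht1_sub[OF Q(1)] by auto
    have cz: "c \<noteq> 0" using c ht1_zero[OF P] by auto
    have bz: "b \<noteq> 0" using b ht1_zero[OF P] by auto
    define m where "m = nat (v Q a)"
    have cm: "c ^ m \<notin> P" using prime_power[OF ht1_prime[OF P] SR cR] c by auto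
    have cmR: "c ^ m \<in> R" using subring_power[OF SR cR] .
    have b'R: "b * c ^ m \<in> R" using subringD(5)[OF SR b(1) cmR] .
    have b'P: "b * c ^ m \<notin> P" using prime_mult[OF ht1_prime[OF P] b(1) cmR] b(2) cm by auto
    have cmz: "c ^ m \<noteq> 0" using cz by simp
    have vb': "v Q' (b * c ^ m) = v Q' b + int m * v Q' c" if "ht1 Q'" for Q'
      using v_mult[OF that bz cmz] v_power[OF that cz] by simp
    have "v Q (b * c ^ m) \<ge> v Q a"
    proof -
      have "v Q c \<ge> 1" using K2[OF Q(1) c(1) cz] .
      then have "int m * v Q c \<ge> int m" by (simp add: mult_le_cancel_left1)
      moreover have "int m \<ge> v Q a" unfolding m_def by simp
      ultimately show ?thesis using vb'[OF Q(1)] K1[OF Q(1) b(1) bz] by linarith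
    qed
    moreover have "v Q' (b * c ^ m) \<ge> v Q' a" if "Q' \<in> G" for Q'
    proof -
      have Q': "ht1 Q'" using that insert unfolding F_def by auto
      have "v Q' c \<ge> 0" using K1[OF Q' cR cz] .
      then have "int m * v Q' c \<ge> 0" by simp
      moreover have "v Q' b \<ge> v Q' a" using b(3) that by blast
      ultimately show ?thesis using vb'[OF Q'] by linarith
    qed
    ultimately show ?case using b'R b'P by auto
  qed
  obtain b where b: "b \<in> R" "b \<notin> P" "\<forall>Q\<in>F. v Q b \<ge> v Q a" using bex[OF finF] by auto
  have bz: "b \<noteq> 0" using b ht1_zero[OF P] by auto
  define x where "x = b * inverse a"
  have xz: "x \<noteq> 0" unfolding x_def using bz a by simp
  have vx: "v Q x = v Q b - v Q a" if "ht1 Q" for Q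
    unfolding x_def using v_mult[OF that bz] v_inverse[OF that a(2)] a(2) by simp
  have xS: "x \<in> S" unfolding S_def
  proof
    fix Q assume "Q \<in> {Q. ht1 Q \<and> Q \<noteq> P}"
    then have Q: "ht1 Q" "Q \<noteq> P" by auto
    have "v Q x \<ge> 0"
    proof (cases "a \<in> Q")
      case True then have "Q \<in> F" unfolding F_def using Q by auto
      then show ?thesis using b(3) vx[OF Q(1)] by auto
    next
      case False then show ?thesis using K3[OF Q(1) aR False] K1[OF Q(1) b(1) bz] vx[OF Q(1)] by simp
    qed
    then show "x \<in> loc Q" using in_loc_iff[OF Q(1) xz] by simp
  qed
  have xP: "x \<notin> loc P"
  proof -
    have "v P x < 0" using vx[OF P] K3[OF P b(1,2)] K2[OF P a] by simp
    then show ?thesis using in_loc_iff[OF P xz] by simp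
  qed
  obtain a' w where aw: "a' \<in> R" "w \<in> W" "x = a' * inverse w" using xS W(2) unfolding localization_def by auto
  have wR: "w \<in> R" "w \<noteq> 0" using aw W(1) unfolding mult_set_def by auto
  have wP: "w \<in> P"
  proof (rule ccontr)
    assume "w \<notin> P"
    then have "x \<in> loc P" unfolding loc_iff using aw wR by blast
    then show False using xP by simp
  qed
  have "inverse w = 1 * inverse w" by simp
  then have iwS: "inverse w \<in> S" using W(2) aw(2) subringD(2)[OF SR] unfolding localization_def by blast
  have vw: "v Q w = 0" if Q: "ht1 Q" "Q \<noteq> P" for Q
  proof -
    have "inverse w \<in> loc Q" using iwS Q unfolding S_def by auto
    then have "v Q (inverse w) \<ge> 0" using in_loc_iff[OF Q(1)] wR by simp
    then show ?thesis using v_inverse[OF Q(1) wR(2)] K1[OF Q(1) wR] by simp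
  qed
  have vP: "v P w \<ge> 1" using K2[OF P wP wR(2)] .
  have "principal_divisor R w = (\<lambda>Q. v P w * delta P Q)"
  proof
    fix Q show "principal_divisor R w Q = v P w * delta P Q"
      unfolding principal_divisor_def delta_def using vw P
      by (cases "ht1 Q"; cases "Q = P") auto
  qed
  then show ?thesis using vP wR by (intro exI[of _ "v P w"]) auto
qed

lemma pd_mult: "x \<noteq> 0 \<Longrightarrow> y \<noteq> 0 \<Longrightarrow> principal_divisor R (x * y) = (\<lambda>Q. principal_divisor R x Q + principal_divisor R y Q)"
  unfolding principal_divisor_def using v_mult by auto

lemma pd_powi: "x \<noteq> 0 \<Longrightarrow> principal_divisor R (x powi k) = (\<lambda>Q. k * principal_divisor R x Q)"
  unfolding principal_divisor_def using v_powi by auto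

lemma pd_one: "principal_divisor R 1 = (\<lambda>Q. 0)"
proof -
  have "v Q 1 = 0" if "ht1 Q" for Q
    using dvrc.val_zero_iff[OF dvrc_loc[OF that], of 1] dvrc.units_one[OF dvrc_loc[OF that]] by simp
  then show ?thesis unfolding principal_divisor_def by auto
qed

lemma torsion_fin:
  assumes dim: "krull_dim_one R" and gp: "globally_perinormal R"
    and F: "finite F" "\<forall>Q\<in>F. ht1 Q"
  shows "\<And>D. (\<forall>Q. D Q \<noteq> 0 \<longrightarrow> Q \<in> F) \<Longrightarrow> \<exists>n::int>0. \<exists>x. x \<noteq> 0 \<and> principal_divisor R x = (\<lambda>Q. n * D Q)"
  using F
proof (induction F rule: finite_induct)
  case empty
  then have "D = (\<lambda>Q. 0)" by auto
  moreover have "(1::'b) \<noteq> 0" by simp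
  ultimately have "(1::'b) \<noteq> 0 \<and> principal_divisor R 1 = (\<lambda>Q. (1::int) * D Q)" using pd_one by simp
  then have "\<exists>x. x \<noteq> 0 \<and> principal_divisor R x = (\<lambda>Q. (1::int) * D Q)" by blast
  moreover have "(0::int) < 1" by simp
  ultimately show ?case by blast
next
  case (insert P F D)
  define D' where "D' = D(P := 0)"
  have "\<forall>Q. D' Q \<noteq> 0 \<longrightarrow> Q \<in> F" using insert(4) unfolding D'_def by auto
  then obtain n' x' where n': "n' > 0" "x' \<noteq> 0" "principal_divisor R x' = (\<lambda>Q. n' * D' Q)"
    using insert by blast
  have P: "ht1 P" using insert by auto
  obtain np w where w: "np > 0" "w \<noteq> 0" "principal_divisor R w = (\<lambda>Q. np * delta P Q)"
    using delta_torsion[OF dim gp P] by blast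
  define k where "k = n' * D P"
  define y where "y = x' powi np * w powi k"
  have yz: "y \<noteq> 0" unfolding y_def using n' w by (simp add: power_int_not_zero)
  have "principal_divisor R y = (\<lambda>Q. np * n' * D Q)"
  proof
    fix Q
    have xz: "x' powi np \<noteq> 0" "w powi k \<noteq> 0" using n' w by (simp_all add: power_int_not_zero)
    have "principal_divisor R y Q = principal_divisor R (x' powi np) Q + principal_divisor R (w powi k) Q"
      unfolding y_def using pd_mult[OF xz] by simp
    also have "principal_divisor R (x' powi np) Q = np * principal_divisor R x' Q"
      using pd_powi[OF n'(2)] by simp
    also have "principal_divisor R (w powi k) Q = k * principal_divisor R w Q"
      using pd_powi[OF w(2)] by simp
    finally have "principal_divisor R y Q = np * (n' * D' Q) + k * (np * delta P Q)"
      using n'(3) w(3) by simp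
    also have "\<dots> = np * n' * D Q" unfolding k_def D'_def delta_def by (auto simp: algebra_simps)
    finally show "principal_divisor R y Q = np * n' * D Q" .
  qed
  moreover have "np * n' > 0" using n' w by simp
  ultimately show ?case using yz by blast
qed

theorem part2:
  assumes dim: "krull_dim_one R" and gp: "globally_perinormal R"
  shows "class_group_torsion R"
  unfolding class_group_torsion_def
proof
  fix D assume D: "D \<in> divisors R"
  define F where "F = {P. D P \<noteq> 0}"
  have F: "finite F" "\<forall>Q\<in>F. ht1 Q" using D unfolding divisors_def F_def by auto
  obtain n x where "n > 0" "x \<noteq> 0" "principal_divisor R x = (\<lambda>Q. n * D Q)"
    using torsion_fin[OF dim gp F, of D] unfolding F_def by blast
  then have "(\<lambda>P. n * D P) \<in> principal_divisors R"
    unfolding principal_divisors_def by (metis (mono_tags, lifting) mem_Collect_eq)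
  then show "\<exists>n>0. (\<lambda>P. n * D P) \<in> principal_divisors R" using \<open>n > 0\<close> by blast
qed

end


lemma frac_dom:
  "\<exists>a\<in>(dom_in_frac :: ('a::idom) fract set). \<exists>b\<in>dom_in_frac. b \<noteq> 0 \<and> z = a * inverse b"
proof (cases z)
  case (Fract a b)
  have "Fract a 1 * inverse (Fract b 1) = Fract a b" using Fract by simp
  moreover have "Fract b 1 \<noteq> 0" using Fract by (simp add: Zero_fract_def eq_fract)
  ultimately show ?thesis using Fract unfolding dom_in_frac_def by (metis rangeI)
qed

theorem theorem6p4:
  assumes "krull_domain (dom_in_frac :: ('a::idom) fract set)"
  shows "(class_group_torsion (dom_in_frac :: 'a fract set)
            \<longrightarrow> globally_perinormal (dom_in_frac :: 'a fract set))
       \<and> (krull_dim_one (dom_in_frac :: 'a fract set)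
            \<and> globally_perinormal (dom_in_frac :: 'a fract set)
            \<longrightarrow> class_group_torsion (dom_in_frac :: 'a fract set))"
proof -
  interpret krullc "dom_in_frac :: 'a fract set"
    using assms frac_dom unfolding krullc_def by blast
  show ?thesis using part1 part2 by blast
qed

end
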